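(* There is a constant $A$ such that, for all sufficiently large $n$, every big irreducible representation $\lambda$ of $S_n$ and every $\pi\in S_n$ with $t(\pi) > \sqrt{n}\log n$ obey $\left|\chi_\lambda(\pi)/d_\lambda\right| \le A^{t(\pi)} n^{-t(\pi)/2}$.
   Context: An irreducible representation $\lambda$ of $S_n$ with character $\chi_\lambda$ and dimension $d_\lambda$ is big if $d_\lambda > e^{-\sqrt{n}\log n}\sqrt{n!}$ (natural logarithm). For $\pi\in S_n$, $t(\pi)$ is the minimum number of transpositions whose product is $\pi$. *)

theory Defs
  imports Complex_Main "HOL-Combinatorics.Combinatorics" "Jordan_Normal_Form.Matrix"
begin

definition mat_trace :: "complex mat \<Rightarrow> complex" where
  "mat_trace M = (\<Sum>i<dim_row M. M $$ (i, i))"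

definition is_rep :: "nat \<Rightarrow> nat \<Rightarrow> ((nat \<Rightarrow> nat) \<Rightarrow> complex mat) \<Rightarrow> bool" where
  "is_rep n d \<rho> \<longleftrightarrow>
     (\<forall>\<sigma>. \<sigma> permutes {..<n} \<longrightarrow> \<rho> \<sigma> \<in> carrier_mat d d) \<and>
     \<rho> id = 1\<^sub>m d \<and>
     (\<forall>\<sigma> \<tau>. \<sigma> permutes {..<n} \<longrightarrow> \<tau> permutes {..<n} \<longrightarrow> \<rho> (\<sigma> \<circ> \<tau>) = \<rho> \<sigma> * \<rho> \<tau>)"

definition invariant_subspace :: "nat \<Rightarrow> nat \<Rightarrow> ((nat \<Rightarrow> nat) \<Rightarrow> complex mat) \<Rightarrow> complex vec set \<Rightarrow> bool" where
  "invariant_subspace n d \<rho> W \<longleftrightarrow>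
     W \<subseteq> carrier_vec d \<and> 0\<^sub>v d \<in> W \<and>
     (\<forall>v\<in>W. \<forall>w\<in>W. v + w \<in> W) \<and>
     (\<forall>c. \<forall>v\<in>W. c \<cdot>\<^sub>v v \<in> W) \<and>
     (\<forall>\<sigma> v. \<sigma> permutes {..<n} \<longrightarrow> v \<in> W \<longrightarrow> \<rho> \<sigma> *\<^sub>v v \<in> W)"

definition irreducible_rep :: "nat \<Rightarrow> nat \<Rightarrow> ((nat \<Rightarrow> nat) \<Rightarrow> complex mat) \<Rightarrow> bool" where
  "irreducible_rep n d \<rho> \<longleftrightarrow> is_rep n d \<rho> \<and> d > 0 \<and>
     (\<forall>W. invariant_subspace n d \<rho> W \<longrightarrow> W = {0\<^sub>v d} \<or> W = carrier_vec d)"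

definition big :: "nat \<Rightarrow> nat \<Rightarrow> bool" where
  "big n d \<longleftrightarrow> real d > exp (- sqrt (real n) * ln (real n)) * sqrt (fact n)"

definition tmin :: "nat \<Rightarrow> (nat \<Rightarrow> nat) \<Rightarrow> nat" where
  "tmin n \<pi> = (LEAST k. \<exists>ts :: (nat \<times> nat) list. length ts = k \<and>
       (\<forall>(a, b) \<in> set ts. a < n \<and> b < n \<and> a \<noteq> b) \<and>
       foldr (\<lambda>(a, b) f. Transposition.transpose a b \<circ> f) ts id = \<pi>)"

end

theory Submission
  imports Defs "Jordan_Normal_Form.Schur_Decomposition"
begin

lemma mult_entry:
  assumes "A \<in> carrier_mat d d" "B \<in> carrier_mat d d" "a < d" "b < d"
  shows "(A * B) $$ (a, b) = (\<Sum>j<d. A $$ (a, j) * B $$ (j, b))"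
  using assms by (simp add: scalar_prod_def atLeast0LessThan)

lemma mat_trace_mult:
  assumes A: "A \<in> carrier_mat d d" and B: "B \<in> carrier_mat d d"
  shows "mat_trace (A * B) = mat_trace (B * A)"
proof -
  have dA: "dim_row (A * B) = d" "dim_row (B * A) = d" using A B by auto
  have "mat_trace (A * B) = (\<Sum>i<d. \<Sum>j<d. A $$ (i, j) * B $$ (j, i))"
    unfolding mat_trace_def dA by (rule sum.cong[OF refl], rule mult_entry[OF A B]) auto
  also have "\<dots> = (\<Sum>j<d. \<Sum>i<d. B $$ (j, i) * A $$ (i, j))"
    by (subst sum.swap) (simp add: mult.commute)
  also have "\<dots> = mat_trace (B * A)"
    unfolding mat_trace_def dA by (rule sum.cong[OF refl], rule mult_entry[OF B A, symmetric]) auto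
  finally show ?thesis .
qed

lemma rep_carrier: "is_rep n d \<rho> \<Longrightarrow> \<sigma> permutes {..<n} \<Longrightarrow> \<rho> \<sigma> \<in> carrier_mat d d"
  unfolding is_rep_def by blast

lemma rep_mult: "is_rep n d \<rho> \<Longrightarrow> \<sigma> permutes {..<n} \<Longrightarrow> \<tau> permutes {..<n} \<Longrightarrow>
   \<rho> (\<sigma> \<circ> \<tau>) = \<rho> \<sigma> * \<rho> \<tau>"
  unfolding is_rep_def by blast

lemma rep_id: "is_rep n d \<rho> \<Longrightarrow> \<rho> id = 1\<^sub>m d"
  unfolding is_rep_def by blast

lemma rep_inv1: assumes "is_rep n d \<rho>" "\<sigma> permutes {..<n}"
  shows "\<rho> \<sigma> * \<rho> (inv_into UNIV \<sigma>) = 1\<^sub>m d" "\<rho> (inv_into UNIV \<sigma>) * \<rho> \<sigma> = 1\<^sub>m d"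
proof -
  have i: "inv_into UNIV \<sigma> permutes {..<n}" using assms(2) by (rule permutes_inv)
  show "\<rho> \<sigma> * \<rho> (inv_into UNIV \<sigma>) = 1\<^sub>m d"
    using rep_mult[OF assms(1,2) i] permutes_inv_o(1)[OF assms(2)] rep_id[OF assms(1)] by simp
  show "\<rho> (inv_into UNIV \<sigma>) * \<rho> \<sigma> = 1\<^sub>m d"
    using rep_mult[OF assms(1) i assms(2)] permutes_inv_o(2)[OF assms(2)] rep_id[OF assms(1)] by simp
qed

lemma char_conj_inv:
  assumes r: "is_rep n d \<rho>" and s: "\<sigma> permutes {..<n}" and p: "\<pi> permutes {..<n}"
  shows "mat_trace (\<rho> (\<sigma> \<circ> \<pi> \<circ> inv_into UNIV \<sigma>)) = mat_trace (\<rho> \<pi>)"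
proof -
  have i: "inv_into UNIV \<sigma> permutes {..<n}" using s by (rule permutes_inv)
  have c: "\<rho> \<sigma> \<in> carrier_mat d d" "\<rho> \<pi> \<in> carrier_mat d d" "\<rho> (inv_into UNIV \<sigma>) \<in> carrier_mat d d"
    using r s p i by (auto intro: rep_carrier)
  have "\<rho> (\<sigma> \<circ> \<pi> \<circ> inv_into UNIV \<sigma>) = \<rho> \<sigma> * (\<rho> \<pi> * \<rho> (inv_into UNIV \<sigma>))"
    using rep_mult[OF r] s p i permutes_compose[OF p s] c
    by (metis assoc_mult_mat comp_assoc permutes_compose)
  then have "mat_trace (\<rho> (\<sigma> \<circ> \<pi> \<circ> inv_into UNIV \<sigma>)) = mat_trace ((\<rho> \<pi> * \<rho> (inv_into UNIV \<sigma>)) * \<rho> \<sigma>)"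
    using mat_trace_mult[of "\<rho> \<sigma>" d "\<rho> \<pi> * \<rho> (inv_into UNIV \<sigma>)"] c by simp
  also have "\<dots> = mat_trace (\<rho> \<pi>)"
    using c rep_inv1[OF r s] by (simp add: assoc_mult_mat[of _ d d _ d _ d])
  finally show ?thesis .
qed

lemma schur_lemma:
  assumes irr: "irreducible_rep n d \<rho>" and T: "T \<in> carrier_mat d d"
    and comm: "\<And>\<sigma>. \<sigma> permutes {..<n} \<Longrightarrow> \<rho> \<sigma> * T = T * \<rho> \<sigma>"
  shows "\<exists>c. T = c \<cdot>\<^sub>m 1\<^sub>m d"
proof -
  have r: "is_rep n d \<rho>" and d: "d > 0" using irr unfolding irreducible_rep_def by auto
  obtain as where as: "char_poly T = (\<Prod>a\<leftarrow>as. [:- a, 1:])" "length as = d"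
    using char_poly_factorized[OF T] by blast
  define a where "a = as ! 0"
  have "a \<in> set as" using as(2) d unfolding a_def by auto
  then have "poly (char_poly T) a = 0" unfolding as(1)
    by (induction as) (auto simp: poly_prod_list)
  then have "eigenvalue T a" using eigenvalue_root_char_poly[OF T] by simp
  then obtain v where v: "v \<in> carrier_vec d" "v \<noteq> 0\<^sub>v d" "T *\<^sub>v v = a \<cdot>\<^sub>v v"
    unfolding eigenvalue_def eigenvector_def using T by auto
  define W where "W = {w \<in> carrier_vec d. T *\<^sub>v w = a \<cdot>\<^sub>v w}"
  have inv: "invariant_subspace n d \<rho> W"
    unfolding invariant_subspace_def
  proof (intro conjI ballI allI impI)
    show "W \<subseteq> carrier_vec d" unfolding W_def by auto
    show "0\<^sub>v d \<in> W" unfolding W_def using T by auto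
  next
    fix x y assume "x \<in> W" "y \<in> W"
    then show "x + y \<in> W" unfolding W_def using T
      by (auto simp: mult_add_distrib_mat_vec smult_add_distrib_vec)
  next
    fix c x assume "x \<in> W"
    then show "c \<cdot>\<^sub>v x \<in> W" unfolding W_def using T
      by (auto simp: mult_mat_vec smult_smult_assoc mult.commute)
  next
    fix \<sigma> x assume s: "\<sigma> permutes {..<n}" and x: "x \<in> W"
    have c: "\<rho> \<sigma> \<in> carrier_mat d d" using rep_carrier[OF r s] .
    have xc: "x \<in> carrier_vec d" using x unfolding W_def by auto
    have "T *\<^sub>v (\<rho> \<sigma> *\<^sub>v x) = (T * \<rho> \<sigma>) *\<^sub>v x" using T c xc by (simp add: assoc_mult_mat_vec)
    also have "\<dots> = (\<rho> \<sigma> * T) *\<^sub>v x" using comm[OF s] by simp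
    also have "\<dots> = \<rho> \<sigma> *\<^sub>v (T *\<^sub>v x)" using T c xc by (simp add: assoc_mult_mat_vec)
    also have "\<dots> = a \<cdot>\<^sub>v (\<rho> \<sigma> *\<^sub>v x)" using x c xc unfolding W_def by (simp add: mult_mat_vec)
    finally show "\<rho> \<sigma> *\<^sub>v x \<in> W" unfolding W_def using c xc by auto
  qed
  have "W \<noteq> {0\<^sub>v d}" using v unfolding W_def by auto
  then have Wf: "W = carrier_vec d" using irr inv unfolding irreducible_rep_def by blast
  have "T = a \<cdot>\<^sub>m 1\<^sub>m d"
  proof (rule eq_matI)
    fix i j assume ij: "i < dim_row (a \<cdot>\<^sub>m 1\<^sub>m d)" "j < dim_col (a \<cdot>\<^sub>m 1\<^sub>m d)"
    then have ij': "i < d" "j < d" by auto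
    have "unit_vec d j \<in> W" using Wf ij' by auto
    then have "T *\<^sub>v unit_vec d j = a \<cdot>\<^sub>v unit_vec d j" unfolding W_def by auto
    then have "(T *\<^sub>v unit_vec d j) $ i = (a \<cdot>\<^sub>v unit_vec d j) $ i" by simp
    moreover have "(T *\<^sub>v unit_vec d j) $ i = T $$ (i, j)"
      using T ij' by simp
    ultimately show "T $$ (i, j) = (a \<cdot>\<^sub>m 1\<^sub>m d) $$ (i, j)" using ij' by (auto simp: unit_vec_def)
  qed (use T in auto)
  then show ?thesis by blast
qed

lemma bij_comp_perm:
  assumes h: "h permutes S"
  shows "bij_betw ((\<circ>) h) {\<sigma>. \<sigma> permutes S} {\<sigma>. \<sigma> permutes S}"
proof (rule bij_betw_byWitness[where f' = "(\<circ>) (inv_into UNIV h)"])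
  show "\<forall>a\<in>{\<sigma>. \<sigma> permutes S}. inv_into UNIV h \<circ> (h \<circ> a) = a"
    using permutes_inv_o(2)[OF h] by (simp add: comp_assoc[symmetric])
  show "\<forall>a\<in>{\<sigma>. \<sigma> permutes S}. h \<circ> (inv_into UNIV h \<circ> a) = a"
    using permutes_inv_o(1)[OF h] by (simp add: comp_assoc[symmetric])
  show "(\<circ>) h ` {\<sigma>. \<sigma> permutes S} \<subseteq> {\<sigma>. \<sigma> permutes S}"
    using h by (auto intro: permutes_compose)
  show "(\<circ>) (inv_into UNIV h) ` {\<sigma>. \<sigma> permutes S} \<subseteq> {\<sigma>. \<sigma> permutes S}"
    using permutes_inv[OF h] by (auto intro: permutes_compose)
qed

lemma inv_comp_perm:
  assumes "h permutes S" "g permutes S"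
  shows "inv_into UNIV (inv_into UNIV h \<circ> g) = inv_into UNIV g \<circ> h"
proof -
  have b: "bij h" "bij g" using assms by (auto simp: permutes_bij)
  then have "bij (inv_into UNIV h)" by (simp add: bij_imp_bij_inv)
  then have "inv_into UNIV (inv_into UNIV h \<circ> g) = inv_into UNIV g \<circ> inv_into UNIV (inv_into UNIV h)"
    using b by (simp add: o_inv_distrib)
  also have "inv_into UNIV (inv_into UNIV h) = h" using b by (simp add: inv_inv_eq)
  finally show ?thesis .
qed

lemma orth_entry:
  assumes irr: "irreducible_rep n d \<rho>" and ik: "i < d" "k < d"
  shows "(\<Sum>g\<in>{\<sigma>. \<sigma> permutes {..<n}}. \<rho> g $$ (i, i) * \<rho> (inv_into UNIV g) $$ (k, k))
          = (if i = k then of_nat (fact n) / of_nat d else 0)"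
proof -
  let ?G = "{\<sigma>. \<sigma> permutes {..<n}}"
  let ?iv = "inv_into UNIV"
  have r: "is_rep n d \<rho>" and d: "d > 0" using irr unfolding irreducible_rep_def by auto
  have cG: "card ?G = fact n" using card_permutations[of "{..<n}" n] by simp
  have finG: "finite ?G" using finite_permutations[of "{..<n}"] by simp
  have rc: "\<And>g. g \<in> ?G \<Longrightarrow> \<rho> g \<in> carrier_mat d d" "\<And>g. g \<in> ?G \<Longrightarrow> \<rho> (?iv g) \<in> carrier_mat d d"
    using r by (auto intro: rep_carrier permutes_inv)
  define T where "T = mat d d (\<lambda>(a, b). \<Sum>g\<in>?G. \<rho> g $$ (a, i) * \<rho> (?iv g) $$ (k, b))"
  have Tc: "T \<in> carrier_mat d d" unfolding T_def by simp
  have comm: "\<rho> h * T = T * \<rho> h" if h: "h permutes {..<n}" for h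
  proof (rule eq_matI)
    have hc: "\<rho> h \<in> carrier_mat d d" using rep_carrier[OF r h] .
    fix a b assume "a < dim_row (T * \<rho> h)" "b < dim_col (T * \<rho> h)"
    then have ab: "a < d" "b < d" using hc Tc by auto
    define F where "F = (\<lambda>g. \<rho> g $$ (a, i) * \<rho> (?iv (?iv h \<circ> g)) $$ (k, b))"
    have "(\<rho> h * T) $$ (a, b) = (\<Sum>j<d. \<rho> h $$ (a, j) * (\<Sum>g\<in>?G. \<rho> g $$ (j, i) * \<rho> (?iv g) $$ (k, b)))"
      using hc Tc ab by (subst mult_entry[of _ d]) (auto simp: T_def)
    also have "\<dots> = (\<Sum>g\<in>?G. (\<Sum>j<d. \<rho> h $$ (a, j) * \<rho> g $$ (j, i)) * \<rho> (?iv g) $$ (k, b))"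
      by (simp add: sum_distrib_left sum_distrib_right mult.assoc sum.swap[of _ "{..<d}"])
    also have "\<dots> = (\<Sum>g\<in>?G. \<rho> (h \<circ> g) $$ (a, i) * \<rho> (?iv g) $$ (k, b))"
    proof (intro sum.cong refl)
      fix g assume g: "g \<in> ?G"
      have "\<rho> (h \<circ> g) = \<rho> h * \<rho> g" using rep_mult[OF r h] g by auto
      then show "(\<Sum>j<d. \<rho> h $$ (a, j) * \<rho> g $$ (j, i)) * \<rho> (?iv g) $$ (k, b) =
          \<rho> (h \<circ> g) $$ (a, i) * \<rho> (?iv g) $$ (k, b)"
        using mult_entry[OF hc rc(1)[OF g] ab(1) ik(1)] by simp
    qed
    also have "\<dots> = (\<Sum>g\<in>?G. F (h \<circ> g))"
      by (intro sum.cong refl) (simp add: F_def comp_assoc[symmetric] permutes_inv_o(2)[OF h])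
    also have "\<dots> = (\<Sum>g\<in>?G. F g)"
      by (rule sum.reindex_bij_betw[OF bij_comp_perm[OF h]])
    also have "\<dots> = (\<Sum>g\<in>?G. \<rho> g $$ (a, i) * \<rho> (?iv (?iv h \<circ> g)) $$ (k, b))"
      by (simp add: F_def)
    also have "\<dots> = (\<Sum>g\<in>?G. \<rho> g $$ (a, i) * (\<Sum>j<d. \<rho> (?iv g) $$ (k, j) * \<rho> h $$ (j, b)))"
    proof (intro sum.cong refl)
      fix g assume g: "g \<in> ?G"
      have "\<rho> (?iv (?iv h \<circ> g)) = \<rho> (?iv g) * \<rho> h"
        using inv_comp_perm[OF h] g rep_mult[OF r _ h] permutes_inv by auto
      then show "\<rho> g $$ (a, i) * \<rho> (?iv (?iv h \<circ> g)) $$ (k, b) =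
          \<rho> g $$ (a, i) * (\<Sum>j<d. \<rho> (?iv g) $$ (k, j) * \<rho> h $$ (j, b))"
        using mult_entry[OF rc(2)[OF g] hc ik(2) ab(2)] by simp
    qed
    also have "\<dots> = (\<Sum>j<d. (\<Sum>g\<in>?G. \<rho> g $$ (a, i) * \<rho> (?iv g) $$ (k, j)) * \<rho> h $$ (j, b))"
      by (simp add: sum_distrib_left sum_distrib_right mult.assoc sum.swap[of _ "{..<d}"])
    also have "\<dots> = (T * \<rho> h) $$ (a, b)"
      using hc Tc ab by (subst mult_entry[of _ d]) (auto simp: T_def)
    finally show "(\<rho> h * T) $$ (a, b) = (T * \<rho> h) $$ (a, b)" .
  qed (use Tc rep_carrier[OF r that] in auto)
  obtain c where Tc1: "T = c \<cdot>\<^sub>m 1\<^sub>m d" using schur_lemma[OF irr Tc comm] by blast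
  have "mat_trace T = (\<Sum>a<d. \<Sum>g\<in>?G. \<rho> g $$ (a, i) * \<rho> (?iv g) $$ (k, a))"
    unfolding mat_trace_def T_def by simp
  also have "\<dots> = (\<Sum>g\<in>?G. \<Sum>a<d. \<rho> (?iv g) $$ (k, a) * \<rho> g $$ (a, i))"
    by (subst sum.swap) (simp add: mult.commute)
  also have "\<dots> = (\<Sum>g\<in>?G. (\<rho> (?iv g) * \<rho> g) $$ (k, i))"
    by (intro sum.cong refl, rule mult_entry[symmetric]) (use rc ik in auto)
  also have "\<dots> = (\<Sum>g\<in>?G. (1\<^sub>m d) $$ (k, i))"
    by (intro sum.cong refl) (use rep_inv1[OF r] in auto)
  also have "\<dots> = of_nat (fact n) * (if k = i then 1 else 0)"
    using cG ik by simp
  finally have tr1: "mat_trace T = of_nat (fact n) * (if k = i then 1 else 0)" .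
  have "mat_trace T = of_nat d * c" unfolding Tc1 mat_trace_def by simp
  then have cval: "c = of_nat (fact n) * (if k = i then 1 else 0) / of_nat d"
    using tr1 d by (simp add: field_simps)
  have "(\<Sum>g\<in>?G. \<rho> g $$ (i, i) * \<rho> (?iv g) $$ (k, k)) = T $$ (i, k)"
    unfolding T_def using ik by simp
  also have "\<dots> = c * (if i = k then 1 else 0)" unfolding Tc1 using ik by simp
  finally show ?thesis unfolding cval by auto
qed

lemma orth_sum:
  assumes irr: "irreducible_rep n d \<rho>"
  shows "(\<Sum>g\<in>{\<sigma>. \<sigma> permutes {..<n}}. mat_trace (\<rho> g) * mat_trace (\<rho> (inv_into UNIV g)))
          = of_nat (fact n)"
proof -
  let ?G = "{\<sigma>. \<sigma> permutes {..<n}}"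
  let ?iv = "inv_into UNIV"
  have r: "is_rep n d \<rho>" and d: "d > 0" using irr unfolding irreducible_rep_def by auto
  have "(\<Sum>g\<in>?G. mat_trace (\<rho> g) * mat_trace (\<rho> (?iv g)))
     = (\<Sum>g\<in>?G. \<Sum>i<d. \<Sum>k<d. \<rho> g $$ (i, i) * \<rho> (?iv g) $$ (k, k))"
  proof (intro sum.cong refl)
    fix g assume g: "g \<in> ?G"
    have "\<rho> g \<in> carrier_mat d d" "\<rho> (?iv g) \<in> carrier_mat d d"
      using r g by (auto intro: rep_carrier permutes_inv)
    then show "mat_trace (\<rho> g) * mat_trace (\<rho> (?iv g)) =
        (\<Sum>i<d. \<Sum>k<d. \<rho> g $$ (i, i) * \<rho> (?iv g) $$ (k, k))"
      unfolding mat_trace_def by (simp add: sum_product)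
  qed
  also have "\<dots> = (\<Sum>i<d. \<Sum>k<d. \<Sum>g\<in>?G. \<rho> g $$ (i, i) * \<rho> (?iv g) $$ (k, k))"
    by (simp add: sum.swap[of _ ?G])
  also have "\<dots> = (\<Sum>i<d. \<Sum>k<d. (if i = k then of_nat (fact n) / of_nat d else 0))"
    by (intro sum.cong refl) (simp add: orth_entry[OF irr])
  also have "\<dots> = (\<Sum>i<d. of_nat (fact n) / of_nat d)"
    by (intro sum.cong refl) simp
  also have "\<dots> = of_nat (fact n)" using d by simp
  finally show ?thesis .
qed

lemma ut_mult:
  assumes A: "A \<in> carrier_mat d d" and B: "B \<in> carrier_mat d d"
    and uA: "upper_triangular A" and uB: "upper_triangular B"
  shows "upper_triangular (A * B) \<and> (\<forall>i<d. (A * B) $$ (i, i) = A $$ (i, i) * B $$ (i, i))"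
proof (intro conjI allI impI upper_triangularI)
  fix i j assume ji: "j < i" and i: "i < dim_row (A * B)"
  then have id: "i < d" using A by simp
  have "(A * B) $$ (i, j) = (\<Sum>l<d. A $$ (i, l) * B $$ (l, j))"
    using mult_entry[OF A B id] ji id by simp
  also have "\<dots> = 0"
  proof (rule sum.neutral, intro ballI)
    fix l assume l: "l \<in> {..<d}"
    show "A $$ (i, l) * B $$ (l, j) = 0"
    proof (cases "l < i")
      case True then show ?thesis using upper_triangularD[OF uA True] id A by simp
    next
      case False then have "j < l" using ji by simp
      then show ?thesis using upper_triangularD[OF uB] l B by simp
    qed
  qed
  finally show "(A * B) $$ (i, j) = 0" .
next
  fix i assume id: "i < d"
  have "(A * B) $$ (i, i) = (\<Sum>l<d. A $$ (i, l) * B $$ (l, i))"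
    using mult_entry[OF A B id id] .
  also have "\<dots> = (\<Sum>l<d. if l = i then A $$ (i, i) * B $$ (i, i) else 0)"
  proof (rule sum.cong[OF refl])
    fix l assume l: "l \<in> {..<d}"
    show "A $$ (i, l) * B $$ (l, i) = (if l = i then A $$ (i, i) * B $$ (i, i) else 0)"
    proof (cases "l < i")
      case True then show ?thesis using upper_triangularD[OF uA True] id A by simp
    next
      case False
      show ?thesis
      proof (cases "l = i")
        case False2: False
        then have "i < l" using False by simp
        then show ?thesis using upper_triangularD[OF uB] l B False2 by simp
      qed simp
    qed
  qed
  also have "\<dots> = A $$ (i, i) * B $$ (i, i)" using id by simp
  finally show "(A * B) $$ (i, i) = A $$ (i, i) * B $$ (i, i)" .
qed

lemma ut_pow:
  assumes B: "B \<in> carrier_mat d d" and uB: "upper_triangular B"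
  shows "upper_triangular (B ^\<^sub>m j) \<and> (\<forall>i<d. (B ^\<^sub>m j) $$ (i, i) = B $$ (i, i) ^ j)"
proof (induction j)
  case 0
  then show ?case using B by simp
next
  case (Suc j)
  have c: "B ^\<^sub>m j \<in> carrier_mat d d" using B by simp
  show ?case
  proof
    show "upper_triangular (B ^\<^sub>m Suc j)" using ut_mult[OF c B _ uB] Suc by simp
    show "\<forall>i<d. (B ^\<^sub>m Suc j) $$ (i, i) = B $$ (i, i) ^ Suc j"
    proof (intro allI impI)
      fix i assume i: "i < d"
      have "(B ^\<^sub>m Suc j) $$ (i, i) = (B ^\<^sub>m j) $$ (i, i) * B $$ (i, i)"
        using ut_mult[OF c B _ uB] Suc i by simp
      also have "\<dots> = B $$ (i, i) ^ j * B $$ (i, i)" using Suc i by simp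
      also have "\<dots> = B $$ (i, i) ^ Suc j" by (rule power_Suc2[symmetric])
      finally show "(B ^\<^sub>m Suc j) $$ (i, i) = B $$ (i, i) ^ Suc j" .
    qed
  qed
qed

lemma trace_sim:
  assumes P: "P \<in> carrier_mat d d" and Q: "Q \<in> carrier_mat d d" and X: "X \<in> carrier_mat d d"
    and QP: "Q * P = 1\<^sub>m d"
  shows "mat_trace (P * X * Q) = mat_trace X"
proof -
  have "mat_trace (P * X * Q) = mat_trace (Q * (P * X))"
    using mat_trace_mult[of "P * X" d Q] P X Q by simp
  also have "Q * (P * X) = (Q * P) * X" using P Q X by (simp add: assoc_mult_mat)
  finally show ?thesis using QP X by simp
qed

lemma rep_pow:
  assumes r: "is_rep n d \<rho>" and g: "g permutes {..<n}"
  shows "(g ^^ j) permutes {..<n} \<and> \<rho> (g ^^ j) = \<rho> g ^\<^sub>m j"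
proof (induction j)
  case 0
  have z: "g ^^ 0 = id" by (simp add: id_def)
  show ?case unfolding z
    by (intro conjI permutes_id trans[OF rep_id[OF r]]) (use rep_carrier[OF r g] in simp)
next
  case (Suc j)
  have e: "g ^^ Suc j = (g ^^ j) \<circ> g" by (rule funpow_Suc_right)
  have p1: "(g ^^ j) \<circ> g permutes {..<n}" by (rule permutes_compose[OF g]) (use Suc in blast)
  have "\<rho> ((g ^^ j) \<circ> g) = \<rho> (g ^^ j) * \<rho> g" by (rule rep_mult[OF r _ g]) (use Suc in blast)
  also have "\<dots> = \<rho> g ^\<^sub>m Suc j" using Suc by simp
  finally show ?case unfolding e using p1 by blast
qed

lemma char_inv_cnj:
  assumes r: "is_rep n d \<rho>" and g: "g permutes {..<n}"
  shows "mat_trace (\<rho> (inv_into UNIV g)) = cnj (mat_trace (\<rho> g))"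
proof -
  let ?M = "\<rho> g"
  have Mc: "?M \<in> carrier_mat d d" using rep_carrier[OF r g] .
  have "permutation g" using g unfolding permutation_permutes by blast
  then obtain k where k: "g ^^ k = id" "k > 0" by (rule permutation_is_nilpotent)
  have Mk: "?M ^\<^sub>m k = 1\<^sub>m d" using rep_pow[OF r g, of k] k rep_id[OF r] by simp
  have ic: "\<rho> (inv_into UNIV g) \<in> carrier_mat d d" using r permutes_inv[OF g] by (rule rep_carrier)
  obtain k' where kk: "k = Suc k'" using k(2) by (cases k) auto
  have k1: "?M ^\<^sub>m (k - 1) * ?M = 1\<^sub>m d" using Mk unfolding kk by simp
  have "\<rho> (inv_into UNIV g) = (?M ^\<^sub>m (k - 1) * ?M) * \<rho> (inv_into UNIV g)"
    using k1 ic by simp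
  also have "\<dots> = ?M ^\<^sub>m (k - 1) * (?M * \<rho> (inv_into UNIV g))"
    using Mc ic by (simp add: assoc_mult_mat[of _ d d _ d _ d])
  also have "\<dots> = ?M ^\<^sub>m (k - 1)" using rep_inv1(1)[OF r g] Mc by simp
  finally have Minv: "\<rho> (inv_into UNIV g) = ?M ^\<^sub>m (k - 1)" .
  obtain es where es: "char_poly ?M = (\<Prod>a\<leftarrow>es. [:- a, 1:])" using char_poly_factorized[OF Mc] by blast
  obtain B P Q where sd: "schur_decomposition ?M es = (B, P, Q)" by (cases "schur_decomposition ?M es") auto
  from schur_decomposition[OF Mc es sd]
  have sim: "similar_mat_wit ?M B P Q" and uB: "upper_triangular B" by auto
  have dM: "dim_row ?M = d" using Mc by simp
  have cs: "B \<in> carrier_mat d d" "P \<in> carrier_mat d d" "Q \<in> carrier_mat d d"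
    and QP: "Q * P = 1\<^sub>m d" and PQ: "P * Q = 1\<^sub>m d" and MB: "?M = P * B * Q"
    using sim unfolding similar_mat_wit_def Let_def dM by auto
  have "B ^\<^sub>m k = Q * ?M ^\<^sub>m k * P" using similar_mat_wit_pow_id[OF similar_mat_wit_sym[OF sim]] .
  also have "\<dots> = 1\<^sub>m d" using Mk QP cs by simp
  finally have Bk: "B ^\<^sub>m k = 1\<^sub>m d" .
  define l where "l = (\<lambda>i. B $$ (i, i))"
  have lk: "l i ^ k = 1" if "i < d" for i
    using ut_pow[OF cs(1) uB, of k] Bk that unfolding l_def by auto
  have lc: "l i ^ (k - 1) = cnj (l i)" if i: "i < d" for i
  proof -
    have "norm (l i) = 1" using power_eq_1_iff[OF lk[OF i]] k(2) by simp
    then have "cnj (l i) * l i = 1" using complex_norm_square[of "l i"] by (simp add: mult.commute)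
    moreover have "l i ^ (k - 1) * l i = 1" using lk[OF i] unfolding kk by (simp add: mult.commute)
    moreover have "l i \<noteq> 0" using lk[OF i] unfolding kk by auto
    ultimately have "l i ^ (k - 1) = 1 / l i" "cnj (l i) = 1 / l i" by (simp_all add: field_simps)
    then show ?thesis by simp
  qed
  have "mat_trace (\<rho> (inv_into UNIV g)) = mat_trace (P * B ^\<^sub>m (k - 1) * Q)"
    using Minv similar_mat_wit_pow_id[OF sim] by simp
  also have "\<dots> = mat_trace (B ^\<^sub>m (k - 1))" by (rule trace_sim) (use cs QP in auto)
  also have "\<dots> = (\<Sum>i<d. l i ^ (k - 1))"
    unfolding mat_trace_def l_def using ut_pow[OF cs(1) uB, of "k - 1"] cs by simp
  also have "\<dots> = (\<Sum>i<d. cnj (l i))" using lc by simp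
  also have "\<dots> = cnj (mat_trace B)" unfolding mat_trace_def l_def using cs by simp
  also have "mat_trace B = mat_trace ?M" unfolding MB by (rule trace_sim[symmetric]) (use cs QP in auto)
  finally show ?thesis .
qed

lemma sum_sq_char:
  assumes irr: "irreducible_rep n d \<rho>"
  shows "(\<Sum>g\<in>{\<sigma>. \<sigma> permutes {..<n}}. (cmod (mat_trace (\<rho> g)))\<^sup>2) = fact n"
proof -
  have r: "is_rep n d \<rho>" using irr unfolding irreducible_rep_def by auto
  have "complex_of_real (\<Sum>g\<in>{\<sigma>. \<sigma> permutes {..<n}}. (cmod (mat_trace (\<rho> g)))\<^sup>2)
      = (\<Sum>g\<in>{\<sigma>. \<sigma> permutes {..<n}}. mat_trace (\<rho> g) * mat_trace (\<rho> (inv_into UNIV g)))"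
    unfolding of_real_sum
  proof (intro sum.cong refl)
    fix g assume "g \<in> {\<sigma>. \<sigma> permutes {..<n}}"
    then have "mat_trace (\<rho> (inv_into UNIV g)) = cnj (mat_trace (\<rho> g))" using char_inv_cnj[OF r] by simp
    then show "complex_of_real ((cmod (mat_trace (\<rho> g)))\<^sup>2) = mat_trace (\<rho> g) * mat_trace (\<rho> (inv_into UNIV g))"
      using complex_norm_square[of "mat_trace (\<rho> g)"] by simp
  qed
  also have "\<dots> = of_nat (fact n)" using orth_sum[OF irr] .
  also have "\<dots> = complex_of_real (fact n)" by simp
  finally show ?thesis using of_real_eq_iff by blast
qed

definition fl :: "(nat \<times> nat) list \<Rightarrow> nat \<Rightarrow> nat" where
  "fl ts = foldr (\<lambda>(a, b) f. Transposition.transpose a b \<circ> f) ts id"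

definition tl_ok :: "nat \<Rightarrow> (nat \<times> nat) list \<Rightarrow> bool" where
  "tl_ok n ts \<longleftrightarrow> (\<forall>(a, b) \<in> set ts. a < n \<and> b < n \<and> a \<noteq> b)"

definition covers :: "(nat \<Rightarrow> nat) \<Rightarrow> nat set \<Rightarrow> bool" where
  "covers \<pi> R \<longleftrightarrow> (\<forall>y. \<pi> y \<noteq> y \<longrightarrow> (\<exists>r\<in>R. \<exists>j. (\<pi> ^^ j) r = y))"

lemma fl_Cons: "fl ((a, b) # ts) = Transposition.transpose a b \<circ> fl ts"
  unfolding fl_def by simp

lemma supp_sub: assumes "\<pi> permutes {..<n}" shows "{x. \<pi> x \<noteq> x} \<subseteq> {..<n}"
proof
  fix x assume x: "x \<in> {x. \<pi> x \<noteq> x}"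
  show "x \<in> {..<n}"
  proof (rule ccontr)
    assume "x \<notin> {..<n}"
    then have "\<pi> x = x" using permutes_not_in[OF assms] by blast
    then show False using x by simp
  qed
qed

lemma orbit_incl:
  assumes step: "\<And>z. \<pi>' z = z \<or> \<pi>' z = \<pi> z \<or> \<pi>' z = \<pi> (\<pi> z)"
  shows "\<exists>i. (\<pi>' ^^ j) r = (\<pi> ^^ i) r"
proof (induction j)
  case 0
  show ?case by (rule exI[of _ 0]) simp
next
  case (Suc j)
  then obtain i where i: "(\<pi>' ^^ j) r = (\<pi> ^^ i) r" by blast
  have e: "(\<pi>' ^^ Suc j) r = \<pi>' ((\<pi> ^^ i) r)" using i by simp
  have s1: "(\<pi> ^^ Suc i) r = \<pi> ((\<pi> ^^ i) r)" by simp
  have s2: "(\<pi> ^^ Suc (Suc i)) r = \<pi> (\<pi> ((\<pi> ^^ i) r))" by simp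
  from step[of "(\<pi> ^^ i) r"] show ?case
  proof (elim disjE)
    assume a: "\<pi>' ((\<pi> ^^ i) r) = (\<pi> ^^ i) r"
    have "(\<pi>' ^^ Suc j) r = (\<pi> ^^ i) r" using e a by simp
    then show ?case by blast
  next
    assume a: "\<pi>' ((\<pi> ^^ i) r) = \<pi> ((\<pi> ^^ i) r)"
    have "(\<pi>' ^^ Suc j) r = (\<pi> ^^ Suc i) r" using e a by simp
    then show ?case by blast
  next
    assume a: "\<pi>' ((\<pi> ^^ i) r) = \<pi> (\<pi> ((\<pi> ^^ i) r))"
    have "(\<pi>' ^^ Suc j) r = (\<pi> ^^ Suc (Suc i)) r" using e a by simp
    then show ?case by blast
  qed
qed

lemma decomp:
  assumes "\<pi> permutes {..<n}"
  shows "\<exists>R L. R \<subseteq> {x. \<pi> x \<noteq> x} \<and> covers \<pi> R \<and> tl_ok n L \<and> fl L = \<pi> \<and>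
     length L + card R \<le> card {x. \<pi> x \<noteq> x}"
  using assms
proof (induction "card {x. \<pi> x \<noteq> x}" arbitrary: \<pi> rule: less_induct)
  case less
  let ?S = "{x. \<pi> x \<noteq> x}"
  have finS: "finite ?S" by (rule finite_subset[OF supp_sub[OF less.prems]]) simp
  show ?case
  proof (cases "?S = {}")
    case True
    then have "\<pi> = id" by (intro ext) auto
    then show ?thesis
      by (intro exI[of _ "{}"] exI[of _ "[]"]) (auto simp: covers_def tl_ok_def fl_def)
  next
    case False
    then obtain x where x: "\<pi> x \<noteq> x" by auto
    define y where "y = \<pi> x"
    define \<pi>' where "\<pi>' = Transposition.transpose x y \<circ> \<pi>"
    have xn: "x < n" using x supp_sub[OF less.prems] by auto
    have yn: "y < n" using permutes_in_image[OF less.prems] xn unfolding y_def by auto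
    have xy: "x \<noteq> y" using x y_def by auto
    have inj: "inj \<pi>" using less.prems permutes_inj by blast
    have p': "\<pi>' permutes {..<n}"
      unfolding \<pi>'_def by (rule permutes_compose[OF less.prems permutes_swap_id]) (use xn yn in auto)
    have step: "\<pi>' z = z \<or> \<pi>' z = \<pi> z \<or> \<pi>' z = \<pi> (\<pi> z)" for z
    proof -
      consider "\<pi> z = x" | "\<pi> z = y" | "\<pi> z \<noteq> x" "\<pi> z \<noteq> y" by blast
      then show ?thesis
      proof cases
        case 1 then show ?thesis unfolding \<pi>'_def y_def by simp
      next
        case 2 then have "z = x" using inj unfolding y_def by (simp add: inj_eq)
        then show ?thesis unfolding \<pi>'_def y_def by simp
      next
        case 3 then show ?thesis unfolding \<pi>'_def by simp
      qed
    qed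
    have sub1: "{z. \<pi>' z \<noteq> z} \<subseteq> ?S - {x}"
    proof
      fix z assume z: "z \<in> {z. \<pi>' z \<noteq> z}"
      have zx: "z \<noteq> x"
      proof
        assume "z = x"
        then have "\<pi>' z = z" unfolding \<pi>'_def y_def by simp
        then show False using z by simp
      qed
      have "\<pi> z \<noteq> z"
      proof
        assume pz: "\<pi> z = z"
        have zy: "z \<noteq> y"
        proof
          assume "z = y"
          then have "\<pi> (\<pi> x) = \<pi> x" using pz unfolding y_def by simp
          then have "\<pi> x = x" using inj by (simp add: inj_eq)
          then show False using x by simp
        qed
        have "\<pi>' z = z" unfolding \<pi>'_def using pz zx zy by simp
        then show False using z by simp
      qed
      then show "z \<in> ?S - {x}" using zx by simp
    qed
    have "{z. \<pi>' z \<noteq> z} \<subset> ?S" using sub1 x by blast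
    then have lt: "card {z. \<pi>' z \<noteq> z} < card ?S" by (rule psubset_card_mono[OF finS])
    obtain R' L' where IH: "R' \<subseteq> {z. \<pi>' z \<noteq> z}" "covers \<pi>' R'" "tl_ok n L'" "fl L' = \<pi>'"
      "length L' + card R' \<le> card {z. \<pi>' z \<noteq> z}"
      using less.hyps[OF lt p'] by blast
    have finR': "finite R'" by (rule finite_subset[OF _ finS]) (use IH(1) sub1 in blast)
    have fl: "fl ((x, y) # L') = \<pi>"
      unfolding fl_Cons IH(4) \<pi>'_def
      by (simp only: comp_assoc[symmetric] transpose_comp_involutory id_comp)
    have tl: "tl_ok n ((x, y) # L')" using IH(3) xn yn xy unfolding tl_ok_def by auto
    have cov': "\<exists>r\<in>R'. \<exists>i. (\<pi> ^^ i) r = z" if nz: "\<pi>' z \<noteq> z" for z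
    proof -
      obtain r j where rj: "r \<in> R'" "(\<pi>' ^^ j) r = z" using IH(2) nz unfolding covers_def by blast
      obtain i where "(\<pi>' ^^ j) r = (\<pi> ^^ i) r" using orbit_incl[OF step, of j r] by blast
      then have "(\<pi> ^^ i) r = z" using rj(2) by simp
      then show ?thesis using rj(1) by blast
    qed
    show ?thesis
    proof (cases "\<pi> y = x")
      case True
      have "\<pi>' y = y" unfolding \<pi>'_def using True by simp
      then have sub2: "{z. \<pi>' z \<noteq> z} \<subseteq> ?S - {x, y}"
        using sub1 by blast
      have ySx: "y \<in> ?S" using True xy by auto
      have "card {z. \<pi>' z \<noteq> z} \<le> card (?S - {x, y})"
        using sub2 finS by (intro card_mono) auto
      also have "\<dots> = card ?S - 2" using x ySx xy finS by (simp add: card_Diff_subset)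
      finally have c2a: "card {z. \<pi>' z \<noteq> z} \<le> card ?S - 2" .
      have "card {x, y} \<le> card ?S" using x ySx finS by (intro card_mono) auto
      then have "2 \<le> card ?S" using xy by simp
      then have c2: "card {z. \<pi>' z \<noteq> z} + 2 \<le> card ?S" using c2a by linarith
      have xR: "x \<notin> R'" using IH(1) sub2 by auto
      have cov: "covers \<pi> (insert x R')"
        unfolding covers_def
      proof (intro allI impI)
        fix z assume z: "\<pi> z \<noteq> z"
        show "\<exists>r\<in>insert x R'. \<exists>j. (\<pi> ^^ j) r = z"
        proof (cases "z = x \<or> z = y")
          case True
          then show ?thesis
          proof
            assume "z = x" then show ?thesis by (intro bexI[of _ x] exI[of _ 0]) auto
          next
            assume "z = y" then show ?thesis
              by (intro bexI[of _ x] exI[of _ 1]) (auto simp: y_def)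
          qed
        next
          case False
          have "\<pi>' z \<noteq> z"
          proof -
            have "\<pi> z \<noteq> x" using False True inj by (metis inj_eq)
            moreover have "\<pi> z \<noteq> y" using False inj unfolding y_def by (metis inj_eq)
            ultimately show ?thesis using z unfolding \<pi>'_def by simp
          qed
          then show ?thesis using cov' by blast
        qed
      qed
      have s1: "insert x R' \<subseteq> ?S" using IH(1) sub1 x by blast
      have "card (insert x R') = Suc (card R')" using finR' xR by simp
      then have "length ((x, y) # L') + card (insert x R') \<le> card ?S" using IH(5) c2 by simp
      then show ?thesis using s1 cov tl fl by blast
    next
      case False
      have c1: "card {z. \<pi>' z \<noteq> z} + 1 \<le> card ?S"
        using lt by simp
      have cov: "covers \<pi> R'"
        unfolding covers_def
      proof (intro allI impI)
        fix z assume z: "\<pi> z \<noteq> z"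
        have inS': "\<pi>' w \<noteq> w" if w: "\<pi> w \<noteq> w" "w \<noteq> x" for w
        proof (cases "\<pi> w = x")
          case True
          then have "\<pi>' w = y" unfolding \<pi>'_def by simp
          moreover have "w \<noteq> y" using True False by auto
          ultimately show ?thesis by simp
        next
          case False2: False
          have "\<pi> w \<noteq> y" using w inj unfolding y_def by (metis inj_eq)
          then show ?thesis using False2 w unfolding \<pi>'_def by simp
        qed
        show "\<exists>r\<in>R'. \<exists>j. (\<pi> ^^ j) r = z"
        proof (cases "z = x")
          case False
          then show ?thesis using cov' inS'[OF z] by blast
        next
          case True
          have "\<pi> (inv_into UNIV \<pi> x) = x" by (rule permutes_inverses(1)[OF less.prems])
          then obtain w where w: "\<pi> w = x" by blast
          have "w \<noteq> x" using w x by auto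
          moreover have "\<pi> w \<noteq> w" using w calculation by auto
          ultimately obtain r i where "r \<in> R'" "(\<pi> ^^ i) r = w" using cov' inS' by blast
          then have "(\<pi> ^^ Suc i) r = z" using w True by simp
          then show ?thesis using \<open>r \<in> R'\<close> by blast
        qed
      qed
      have s1: "R' \<subseteq> ?S" using IH(1) sub1 by blast
      have "length ((x, y) # L') + card R' \<le> card ?S" using IH(5) c1 by simp
      then show ?thesis using s1 cov tl fl by blast
    qed
  qed
qed

lemma supp_fl:
  "{x. fl L x \<noteq> x} \<subseteq> fst ` set L \<union> snd ` set L"
proof (induction L)
  case Nil
  then show ?case by (simp add: fl_def)
next
  case (Cons p L)
  obtain a b where p: "p = (a, b)" by (cases p)
  show ?case
  proof
    fix x assume "x \<in> {x. fl (p # L) x \<noteq> x}"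
    then have h: "Transposition.transpose a b (fl L x) \<noteq> x" unfolding p fl_Cons by simp
    have "x = a \<or> x = b \<or> fl L x \<noteq> x"
    proof (rule ccontr)
      assume "\<not> (x = a \<or> x = b \<or> fl L x \<noteq> x)"
      then have "x \<noteq> a" "x \<noteq> b" "fl L x = x" by auto
      then have "Transposition.transpose a b (fl L x) = x" by simp
      with h show False by simp
    qed
    then show "x \<in> fst ` set (p # L) \<union> snd ` set (p # L)"
    proof (elim disjE)
      assume "x = a" then show ?thesis using p by force
    next
      assume "x = b" then show ?thesis using p by force
    next
      assume "fl L x \<noteq> x"
      then have "x \<in> fst ` set L \<union> snd ` set L" using Cons.IH by blast
      then show ?thesis by auto
    qed
  qed
qed

lemma card_supp_fl: "card {x. fl L x \<noteq> x} \<le> 2 * length L"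
proof -
  have "card {x. fl L x \<noteq> x} \<le> card (fst ` set L \<union> snd ` set L)"
    by (rule card_mono[OF _ supp_fl]) simp
  also have "\<dots> \<le> card (fst ` set L) + card (snd ` set L)" by (rule card_Un_le)
  also have "card (fst ` set L) \<le> card (set L)" by (rule card_image_le) simp
  also have "card (snd ` set L) \<le> card (set L)" by (rule card_image_le) simp
  also have "card (set L) \<le> length L" by (rule card_length)
  finally show ?thesis by simp
qed

lemma tmin_bounds:
  assumes "\<pi> permutes {..<n}"
  shows "\<exists>R. R \<subseteq> {x. \<pi> x \<noteq> x} \<and> covers \<pi> R \<and> tmin n \<pi> + card R \<le> card {x. \<pi> x \<noteq> x}
     \<and> card {x. \<pi> x \<noteq> x} \<le> 2 * tmin n \<pi>"
proof -
  obtain R L where RL: "R \<subseteq> {x. \<pi> x \<noteq> x}" "covers \<pi> R" "tl_ok n L" "fl L = \<pi>"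
     "length L + card R \<le> card {x. \<pi> x \<noteq> x}"
    using decomp[OF assms] by blast
  let ?P = "\<lambda>k. \<exists>ts :: (nat \<times> nat) list. length ts = k \<and>
       (\<forall>(a, b) \<in> set ts. a < n \<and> b < n \<and> a \<noteq> b) \<and>
       foldr (\<lambda>(a, b) f. Transposition.transpose a b \<circ> f) ts id = \<pi>"
  have PL: "?P (length L)"
  proof (intro exI[of _ L] conjI refl)
    show "\<forall>(a, b) \<in> set L. a < n \<and> b < n \<and> a \<noteq> b" using RL(3) unfolding tl_ok_def .
    show "foldr (\<lambda>(a, b) f. Transposition.transpose a b \<circ> f) L id = \<pi>" using RL(4) unfolding fl_def .
  qed
  have le: "tmin n \<pi> \<le> length L" unfolding tmin_def by (rule Least_le[of ?P "length L", OF PL])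
  have "?P (tmin n \<pi>)" unfolding tmin_def by (rule LeastI[of ?P "length L", OF PL])
  then obtain ts where ts: "length ts = tmin n \<pi>" "fl ts = \<pi>" unfolding fl_def by blast
  have c2: "card {x. \<pi> x \<noteq> x} \<le> 2 * tmin n \<pi>" using card_supp_fl[of ts] ts by simp
  have "tmin n \<pi> + card R \<le> card {x. \<pi> x \<noteq> x}" using RL(5) le by linarith
  then show ?thesis using RL(1,2) c2 by blast
qed

definition cent :: "nat \<Rightarrow> (nat \<Rightarrow> nat) \<Rightarrow> (nat \<Rightarrow> nat) set" where
  "cent n \<pi> = {\<sigma>. \<sigma> permutes {..<n} \<and> \<sigma> \<circ> \<pi> = \<pi> \<circ> \<sigma>}"

lemma comm_funpow:
  assumes "\<sigma> \<circ> \<pi> = \<pi> \<circ> \<sigma>"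
  shows "\<sigma> ((\<pi> ^^ j) z) = (\<pi> ^^ j) (\<sigma> z)"
proof (induction j)
  case (Suc j)
  have "\<sigma> (\<pi> ((\<pi> ^^ j) z)) = \<pi> (\<sigma> ((\<pi> ^^ j) z))" using fun_cong[OF assms, of "(\<pi> ^^ j) z"] by simp
  then show ?case using Suc by simp
qed simp

lemma cent_bound:
  assumes p: "\<pi> permutes {..<n}" and R: "R \<subseteq> {x. \<pi> x \<noteq> x}" and cov: "covers \<pi> R"
  shows "card (cent n \<pi>) \<le> fact (n - card {x. \<pi> x \<noteq> x}) * card {x. \<pi> x \<noteq> x} ^ card R"
proof -
  let ?S = "{x. \<pi> x \<noteq> x}"
  define F where "F = {..<n} - ?S"
  have Sn: "?S \<subseteq> {..<n}" using supp_sub[OF p] .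
  have finS: "finite ?S" by (rule finite_subset[OF Sn]) simp
  have finF: "finite F" unfolding F_def by simp
  have cF: "card F = n - card ?S" unfolding F_def using Sn by (simp add: card_Diff_subset finS)
  have finR: "finite R" by (rule finite_subset[OF R finS])
  define \<Phi> where "\<Phi> = (\<lambda>\<sigma>::nat\<Rightarrow>nat. ((\<lambda>x. if x \<in> F then \<sigma> x else x), restrict \<sigma> R))"
  define Tg where "Tg = {\<tau>. \<tau> permutes F} \<times> (R \<rightarrow>\<^sub>E ?S)"
  have cT: "card Tg = fact (n - card ?S) * card ?S ^ card R"
    unfolding Tg_def using finF finR cF
    by (simp add: card_cartesian_product card_permutations card_PiE prod_constant)
  have finT: "finite Tg" unfolding Tg_def using finF finR finS
    by (intro finite_cartesian_product finite_permutations finite_PiE) auto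
  have props: "\<sigma> \<in> cent n \<pi> \<Longrightarrow> (\<forall>z. \<sigma> (\<pi> z) = \<pi> (\<sigma> z)) \<and> inj \<sigma> \<and> \<sigma> permutes {..<n}" for \<sigma>
    unfolding cent_def by (auto simp: fun_eq_iff permutes_inj)
  have img: "\<Phi> ` cent n \<pi> \<subseteq> Tg"
  proof
    fix u assume "u \<in> \<Phi> ` cent n \<pi>"
    then obtain \<sigma> where s: "\<sigma> \<in> cent n \<pi>" and u: "u = \<Phi> \<sigma>" by blast
    have com: "\<And>z. \<sigma> (\<pi> z) = \<pi> (\<sigma> z)" and inj: "inj \<sigma>" and sp: "\<sigma> permutes {..<n}"
      using props[OF s] by blast+
    define \<tau> where "\<tau> = (\<lambda>x. if x \<in> F then \<sigma> x else x)"
    have mapF: "\<tau> ` F \<subseteq> F"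
    proof
      fix w assume "w \<in> \<tau> ` F"
      then obtain z where z: "z \<in> F" "w = \<sigma> z" unfolding \<tau>_def by auto
      have e: "\<pi> z = z" using z unfolding F_def by simp
      have "\<sigma> (\<pi> z) = \<pi> (\<sigma> z)" by (rule com)
      then have "\<sigma> z = \<pi> (\<sigma> z)" unfolding e .
      then have "\<pi> (\<sigma> z) = \<sigma> z" by (rule sym)
      moreover have "\<sigma> z < n" using permutes_in_image[OF sp] z unfolding F_def by auto
      ultimately show "w \<in> F" using z unfolding F_def by auto
    qed
    have injF: "inj_on \<tau> F"
    proof (rule inj_onI)
      fix a b assume ab: "a \<in> F" "b \<in> F" "\<tau> a = \<tau> b"
      then have "\<sigma> a = \<sigma> b" unfolding \<tau>_def by simp
      then show "a = b" by (rule injD[OF inj])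
    qed
    have "\<tau> ` F = F" using endo_inj_surj[OF finF mapF injF] .
    then have "bij_betw \<tau> F F" using injF by (simp add: bij_betw_def)
    then have "\<tau> permutes F" by (rule bij_imp_permutes) (simp add: \<tau>_def)
    moreover have "restrict \<sigma> R \<in> R \<rightarrow>\<^sub>E ?S"
    proof
      fix r assume r: "r \<in> R"
      have "\<pi> r \<noteq> r" using R r by auto
      then have "\<sigma> (\<pi> r) \<noteq> \<sigma> r" using inj by (simp add: inj_eq)
      then show "restrict \<sigma> R r \<in> ?S" using com[of r] r by simp
    qed simp
    ultimately show "u \<in> Tg" unfolding u \<Phi>_def Tg_def \<tau>_def by simp
  qed
  have injP: "inj_on \<Phi> (cent n \<pi>)"
  proof (rule inj_onI)
    fix \<sigma>1 \<sigma>2 assume s1: "\<sigma>1 \<in> cent n \<pi>" and s2: "\<sigma>2 \<in> cent n \<pi>" and e: "\<Phi> \<sigma>1 = \<Phi> \<sigma>2"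
    have ea: "(\<lambda>x. if x \<in> F then \<sigma>1 x else x) = (\<lambda>x. if x \<in> F then \<sigma>2 x else x)"
      and eb: "restrict \<sigma>1 R = restrict \<sigma>2 R" using e unfolding \<Phi>_def by simp_all
    have e1: "\<sigma>1 x = \<sigma>2 x" if "x \<in> F" for x using fun_cong[OF ea, of x] that by simp
    have e2: "\<sigma>1 r = \<sigma>2 r" if "r \<in> R" for r using fun_cong[OF eb, of r] that by simp
    show "\<sigma>1 = \<sigma>2"
    proof
      fix x
      show "\<sigma>1 x = \<sigma>2 x"
      proof (cases "x < n")
        case False
        have p1: "\<sigma>1 permutes {..<n}" and p2: "\<sigma>2 permutes {..<n}" using props[OF s1] props[OF s2] by blast+
        have "\<sigma>1 x = x" using permutes_not_in[OF p1] False by simp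
        moreover have "\<sigma>2 x = x" using permutes_not_in[OF p2] False by simp
        ultimately show ?thesis by simp
      next
        case True
        show ?thesis
        proof (cases "\<pi> x = x")
          case True2: True
          then show ?thesis using e1 True unfolding F_def by simp
        next
          case False
          then obtain r j where r: "r \<in> R" "(\<pi> ^^ j) r = x" using cov unfolding covers_def by blast
          have c1: "\<sigma>1 \<circ> \<pi> = \<pi> \<circ> \<sigma>1" and c2: "\<sigma>2 \<circ> \<pi> = \<pi> \<circ> \<sigma>2" using s1 s2 unfolding cent_def by auto
          show ?thesis using comm_funpow[OF c1, of j r] comm_funpow[OF c2, of j r] e2[OF r(1)] r(2)
            by simp
        qed
      qed
    qed
  qed
  have "card (cent n \<pi>) = card (\<Phi> ` cent n \<pi>)" using card_image[OF injP] by simp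
  also have "\<dots> \<le> card Tg" using card_mono[OF finT img] .
  finally show ?thesis using cT by simp
qed

lemma class_bound:
  assumes irr: "irreducible_rep n d \<rho>" and p: "\<pi> permutes {..<n}"
  shows "(cmod (mat_trace (\<rho> \<pi>)))\<^sup>2 \<le> real (card (cent n \<pi>))"
proof -
  let ?G = "{\<sigma>. \<sigma> permutes {..<n}}"
  let ?iv = "inv_into UNIV"
  define f where "f = (\<lambda>\<sigma>::nat\<Rightarrow>nat. \<sigma> \<circ> \<pi> \<circ> ?iv \<sigma>)"
  define h where "h = (\<lambda>g. (cmod (mat_trace (\<rho> g)))\<^sup>2)"
  have r: "is_rep n d \<rho>" using irr unfolding irreducible_rep_def by auto
  have finG: "finite ?G" using finite_permutations[of "{..<n}"] by simp
  have cG: "card ?G = fact n" using card_permutations[of "{..<n}" n] by simp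
  have fG: "f ` ?G \<subseteq> ?G" unfolding f_def
    using p by (auto intro!: permutes_compose permutes_inv)
  have hf: "h (f \<sigma>) = h \<pi>" if "\<sigma> \<in> ?G" for \<sigma>
    unfolding h_def f_def using char_conj_inv[OF r _ p] that by simp
  have fib: "card {x \<in> ?G. f x = y} \<le> card (cent n \<pi>)" if y: "y \<in> f ` ?G" for y
  proof -
    obtain s where s: "s \<in> ?G" "y = f s" using y by blast
    have sp: "s permutes {..<n}" using s by simp
    show ?thesis
    proof (rule card_inj_on_le[where f = "\<lambda>x. ?iv s \<circ> x"])
      show "inj_on (\<lambda>x. ?iv s \<circ> x) {x \<in> ?G. f x = y}"
      proof (rule inj_onI)
        fix x1 x2 assume "?iv s \<circ> x1 = ?iv s \<circ> x2"
        then have "s \<circ> (?iv s \<circ> x1) = s \<circ> (?iv s \<circ> x2)" by simp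
        then show "x1 = x2" using permutes_inv_o(1)[OF sp] by (simp add: comp_assoc[symmetric])
      qed
      show "(\<lambda>x. ?iv s \<circ> x) ` {x \<in> ?G. f x = y} \<subseteq> cent n \<pi>"
      proof
        fix c assume "c \<in> (\<lambda>x. ?iv s \<circ> x) ` {x \<in> ?G. f x = y}"
        then obtain x where x: "x permutes {..<n}" "f x = f s" and c: "c = ?iv s \<circ> x"
          using s by auto
        have cp: "c permutes {..<n}" unfolding c using x(1) permutes_inv[OF sp] by (rule permutes_compose)
        have "c (\<pi> z) = \<pi> (c z)" for z
        proof -
          have "x (\<pi> (?iv x (x z))) = s (\<pi> (?iv s (x z)))" using x(2) unfolding f_def by (metis comp_apply)
          then have "x (\<pi> z) = s (\<pi> (?iv s (x z)))" using permutes_inverses(2)[OF x(1)] by simp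
          then have "?iv s (x (\<pi> z)) = \<pi> (?iv s (x z))" using permutes_inverses(2)[OF sp] by metis
          then show ?thesis unfolding c by simp
        qed
        then show "c \<in> cent n \<pi>" unfolding cent_def using cp by (auto simp: fun_eq_iff)
      qed
      have "cent n \<pi> \<subseteq> ?G" unfolding cent_def by auto
      then show "finite (cent n \<pi>)" using finG by (rule finite_subset)
    qed
  qed
  have h0: "h g \<ge> 0" for g unfolding h_def by simp
  have "real (fact n) * h \<pi> = (\<Sum>\<sigma>\<in>?G. h (f \<sigma>))" using hf cG by simp
  also have "\<dots> = (\<Sum>y\<in>f ` ?G. \<Sum>x\<in>{x \<in> ?G. f x = y}. h (f x))"
    by (rule sum.image_gen[OF finG])
  also have "\<dots> = (\<Sum>y\<in>f ` ?G. real (card {x \<in> ?G. f x = y}) * h y)"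
    by (intro sum.cong refl) simp
  also have "\<dots> \<le> (\<Sum>y\<in>f ` ?G. real (card (cent n \<pi>)) * h y)"
    by (intro sum_mono mult_right_mono) (use fib h0 in auto)
  also have "\<dots> = real (card (cent n \<pi>)) * (\<Sum>y\<in>f ` ?G. h y)" by (simp add: sum_distrib_left)
  also have "\<dots> \<le> real (card (cent n \<pi>)) * (\<Sum>y\<in>?G. h y)"
    by (intro mult_left_mono sum_mono2 finG fG) (use h0 in auto)
  also have "(\<Sum>y\<in>?G. h y) = fact n" unfolding h_def using sum_sq_char[OF irr] by simp
  finally have "real (fact n) * h \<pi> \<le> real (card (cent n \<pi>)) * fact n" .
  moreover have "real (fact n) > 0" by simp
  ultimately show ?thesis unfolding h_def by (simp add: mult.commute)
qed

lemma suc_pow_le: "real (Suc n) ^ n \<le> exp 1 * real n ^ n"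
proof (cases "n = 0")
  case False
  then have np: "real n > 0" by simp
  have "real (Suc n) = real n * (1 + 1 / real n)" using np by (simp add: field_simps)
  also have "\<dots> \<le> real n * exp (1 / real n)"
    using np by (intro mult_left_mono) (auto simp: add.commute exp_ge_add_one_self)
  finally have "real (Suc n) ^ n \<le> (real n * exp (1 / real n)) ^ n"
    by (intro power_mono) auto
  also have "\<dots> = real n ^ n * exp (1 / real n) ^ n" by (simp add: power_mult_distrib)
  also have "exp (1 / real n) ^ n = exp 1"
    using np by (simp add: exp_of_nat_mult[symmetric])
  finally show ?thesis by (simp add: mult.commute)
qed simp

lemma pow_le_exp_fact: "real n ^ n \<le> exp (real n) * fact n"
proof (induction n)
  case (Suc n)
  have "real (Suc n) ^ Suc n = real (Suc n) * real (Suc n) ^ n" by simp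
  also have "\<dots> \<le> real (Suc n) * (exp 1 * real n ^ n)"
    by (intro mult_left_mono suc_pow_le) simp
  also have "\<dots> \<le> real (Suc n) * (exp 1 * (exp (real n) * fact n))"
    by (intro mult_left_mono Suc) auto
  also have "\<dots> = exp (real (Suc n)) * fact (Suc n)"
    by (simp add: exp_add[symmetric] algebra_simps)
  finally show ?case .
qed simp

lemma fact_pow_le: "fact k * k ^ m \<le> (fact (k + m) :: nat)"
proof (induction m)
  case (Suc m)
  have "fact k * k ^ Suc m = (fact k * k ^ m) * k" by simp
  also have "\<dots> \<le> fact (k + m) * Suc (k + m)" by (intro mult_mono Suc) auto
  also have "\<dots> = fact (k + Suc m)" by (simp add: mult.commute)
  finally show ?case .
qed simp

lemma fact_ineq:
  assumes "m \<le> n"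
  shows "real n ^ m * fact (n - m) \<le> exp (2 * real m) * fact n"
proof (cases "n \<le> 2 * m")
  case True
  have "real (fact (n - m)) \<le> real (n - m) ^ (n - m)"
    using fact_le_power[of "n - m"] by (metis of_nat_fact of_nat_le_iff of_nat_power)
  also have "\<dots> \<le> real n ^ (n - m)" by (intro power_mono) auto
  finally have "real n ^ m * fact (n - m) \<le> real n ^ m * real n ^ (n - m)"
    by (intro mult_left_mono) auto
  also have "\<dots> = real n ^ n" using assms by (simp add: power_add[symmetric])
  also have "\<dots> \<le> exp (real n) * fact n" by (rule pow_le_exp_fact)
  also have "\<dots> \<le> exp (2 * real m) * fact n" using True by (intro mult_right_mono) auto
  finally show ?thesis .
next
  case False
  define k where "k = n - m"
  have nk: "n = k + m" and n2k: "real n \<le> 2 * real k" using assms False unfolding k_def by auto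
  have "real n ^ m * fact (n - m) \<le> (2 * real k) ^ m * fact k"
    unfolding k_def[symmetric] by (intro mult_right_mono power_mono n2k) auto
  also have "\<dots> = 2 ^ m * (fact k * real k ^ m)" by (simp add: power_mult_distrib)
  also have "\<dots> \<le> 2 ^ m * fact n"
    using fact_pow_le[of k m] unfolding nk
    by (intro mult_left_mono) (metis of_nat_fact of_nat_le_iff of_nat_mult of_nat_power, simp)
  also have "(2::real) ^ m \<le> exp (2 * real m)"
  proof -
    have "(2::real) ^ m \<le> exp 1 ^ m"
      by (intro power_mono) (use exp_ge_add_one_self[of 1] in auto)
    also have "\<dots> \<le> exp 1 ^ (2 * m)" by (intro power_increasing) auto
    also have "\<dots> = exp (2 * real m)" by (simp add: exp_of_nat_mult[symmetric])
    finally show ?thesis .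
  qed
  then have "2 ^ m * fact n \<le> exp (2 * real m) * fact n" by (intro mult_right_mono) auto
  finally show ?thesis .
qed

lemma main_bound:
  assumes irr: "irreducible_rep n d \<rho>" and bg: "big n d" and p: "\<pi> permutes {..<n}"
    and n1: "n \<ge> 1" and tg: "real (tmin n \<pi>) > sqrt (real n) * ln (real n)"
  shows "cmod (mat_trace (\<rho> \<pi>) / of_nat d) \<le> exp 3 ^ tmin n \<pi> * real n powr (- real (tmin n \<pi>) / 2)"
proof -
  let ?t = "tmin n \<pi>"
  let ?S = "{x. \<pi> x \<noteq> x}"
  let ?m = "card ?S"
  let ?X = "cmod (mat_trace (\<rho> \<pi>))"
  have d: "d > 0" using irr unfolding irreducible_rep_def by auto
  obtain R where R: "R \<subseteq> ?S" "covers \<pi> R" "?t + card R \<le> ?m" "?m \<le> 2 * ?t"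
    using tmin_bounds[OF p] by blast
  have mn: "?m \<le> n" using card_mono[OF _ supp_sub[OF p]] by simp
  have np: "real n > 0" using n1 by simp
  have X2: "?X\<^sup>2 \<le> real (fact (n - ?m) * ?m ^ card R)"
    using class_bound[OF irr p] cent_bound[OF p R(1,2)]
    by (meson of_nat_le_iff order_trans)
  have "real n ^ ?t * ?X\<^sup>2 \<le> real n ^ ?t * (fact (n - ?m) * real ?m ^ card R)"
    using X2 by (intro mult_left_mono) auto
  also have "\<dots> \<le> real n ^ ?t * (fact (n - ?m) * real n ^ card R)"
    using mn by (intro mult_left_mono power_mono) auto
  also have "\<dots> = real n ^ (?t + card R) * fact (n - ?m)" by (simp add: power_add)
  also have "\<dots> \<le> real n ^ ?m * fact (n - ?m)"
    using R(3) n1 by (intro mult_right_mono power_increasing) auto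
  also have "\<dots> \<le> exp (2 * real ?m) * fact n" using fact_ineq[OF mn] .
  also have "\<dots> \<le> exp (4 * real ?t) * fact n"
    using R(4) by (intro mult_right_mono) auto
  finally have k1: "real n ^ ?t * ?X\<^sup>2 \<le> exp (4 * real ?t) * fact n" .
  have E: "exp (- sqrt (real n) * ln (real n)) * sqrt (fact n) < real d"
    using bg unfolding big_def by simp
  have "(exp (- sqrt (real n) * ln (real n)) * sqrt (fact n))\<^sup>2 < (real d)\<^sup>2"
    using E by (intro power_strict_mono) auto
  then have "exp (- sqrt (real n) * ln (real n)) ^ 2 * fact n < (real d)\<^sup>2"
    by (simp add: power_mult_distrib)
  moreover have "exp (- sqrt (real n) * ln (real n)) ^ 2 = exp (- 2 * (sqrt (real n) * ln (real n)))"
    by (simp add: exp_of_nat_mult[symmetric] power2_eq_square exp_add[symmetric])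
  moreover have "exp (- 2 * real ?t) \<le> exp (- 2 * (sqrt (real n) * ln (real n)))"
    using tg by simp
  ultimately have "exp (- 2 * real ?t) * fact n < (real d)\<^sup>2"
    by (smt (verit) fact_gt_zero mult_right_mono of_nat_0_less_iff)
  then have "fact n < exp (2 * real ?t) * (real d)\<^sup>2"
    by (simp add: exp_minus field_simps)
  then have fn: "real (fact n) \<le> exp (2 * real ?t) * (real d)\<^sup>2" by simp
  have e6: "exp (4 * real ?t) * exp (2 * real ?t) = exp (6 * real ?t)"
    by (simp add: exp_add[symmetric])
  have "real n ^ ?t * ?X\<^sup>2 \<le> exp (4 * real ?t) * fact n" by (rule k1)
  also have "\<dots> \<le> exp (4 * real ?t) * (exp (2 * real ?t) * (real d)\<^sup>2)"
    using fn by (intro mult_left_mono) auto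
  also have "\<dots> = exp (6 * real ?t) * (real d)\<^sup>2" using e6 by (simp add: mult.assoc[symmetric])
  finally have k2: "real n ^ ?t * ?X\<^sup>2 \<le> exp (6 * real ?t) * (real d)\<^sup>2" .
  define x where "x = ?X / real d"
  define y where "y = exp 3 ^ ?t * real n powr (- real ?t / 2)"
  have y0: "y \<ge> 0" unfolding y_def by simp
  have "y\<^sup>2 = exp 3 ^ (2 * ?t) * (real n powr (- real ?t / 2))\<^sup>2"
    unfolding y_def by (simp add: power_mult_distrib power_mult[symmetric] mult.commute)
  also have "(real n powr (- real ?t / 2))\<^sup>2 = real n powr (- real ?t)"
    by (simp add: power2_eq_square powr_add[symmetric])
  also have "\<dots> = 1 / real n ^ ?t" using np by (simp add: powr_minus powr_realpow divide_inverse)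
  also have "exp 3 ^ (2 * ?t) = exp (6 * real ?t)" by (simp add: exp_of_nat_mult[symmetric])
  finally have y2: "y\<^sup>2 = exp (6 * real ?t) / real n ^ ?t" by simp
  have "x\<^sup>2 = ?X\<^sup>2 / (real d)\<^sup>2" unfolding x_def by (simp add: power_divide)
  also have "\<dots> \<le> exp (6 * real ?t) / real n ^ ?t"
    using k2 d np by (simp add: field_simps)
  finally have "x\<^sup>2 \<le> y\<^sup>2" using y2 by simp
  then have "x \<le> y" using y0 by (rule power2_le_imp_le)
  moreover have "cmod (mat_trace (\<rho> \<pi>) / of_nat d) = x" unfolding x_def by (simp add: norm_divide)
  ultimately show ?thesis unfolding y_def by simp
qed

theorem lemma7:
  shows "\<exists>A::real. \<exists>N::nat. \<forall>n\<ge>N. \<forall>d \<rho> \<pi>.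
     irreducible_rep n d \<rho> \<longrightarrow> big n d \<longrightarrow> \<pi> permutes {..<n} \<longrightarrow>
     real (tmin n \<pi>) > sqrt (real n) * ln (real n) \<longrightarrow>
     cmod (mat_trace (\<rho> \<pi>) / of_nat d) \<le> A ^ tmin n \<pi> * real n powr (- real (tmin n \<pi>) / 2)"
  by (intro exI[of _ "exp 3"] exI[of _ 1] allI impI main_bound) auto

end
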